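(* The multiplication map $m:\Omega^1_{\mathcal D}(\mathcal A)\otimes_{\mathcal A}\Omega^1_{\mathcal D}(\mathcal A)\to\Omega^2_{\mathcal D}(\mathcal A)$ is surjective and satisfies, for all $a_i,b_i\in\mathcal A$, $$m\Big(\sum_{i=1}^3 e_ia_i\otimes\sum_{j=1}^3 e_jb_j\Big)=\sum_{1\le i<j\le 3}e_{ij}(a_ib_j-a_jb_i).$$
   Context: Let $\mathcal O_3$ be the Cuntz algebra with three generators: the universal C*-algebra generated by $S_1,S_2,S_3$ with $S_i^*S_i=1$ ($i=1,2,3$) and $\sum_{j=1}^3 S_jS_j^*=1$. Let $\mathcal A$ be the unital $*$-subalgebra of $\mathcal O_3$ generated (algebraically) by $S_1,S_2,S_3$ (the paper denotes it also by $\mathcal O_3$). For $A=(a_{ij})\in SO(3)$, $\alpha_A(S_i)=\sum_j a_{ij}S_j$ defines an automorphism; differentiating along the one-parameter subgroups $\exp(\theta X_k)$ of $SO(3)$ gives three $*$-derivations $\partial_1,\partial_2,\partial_3$ of $\mathcal A$, determined by $\partial_1S_1=0,\ \partial_1S_2=-S_3,\ \partial_1S_3=S_2$; $\partial_2S_1=-S_3,\ \partial_2S_2=0,\ \partial_2S_3=S_1$; $\partial_3S_1=S_2,\ \partial_3S_2=-S_1,\ \partial_3S_3=0$. They satisfy $[\partial_1,\partial_2]=-\partial_3$, $[\partial_2,\partial_3]=\partial_1$, $[\partial_1,\partial_3]=-\partial_2$. Let $\tau$ be the unique (faithful) KMS state of $\mathcal O_3$, $\mathcal H=L^2(\mathcal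 O_3,\tau)\otimes\mathbb C^N$, $\pi(a)=a\otimes I$ (left multiplication), and $\mathcal D=\sum_{i=1}^3\partial_i\otimes\sigma_i$, where $\sigma_1,\sigma_2,\sigma_3\in M_N(\mathbb C)$ satisfy $\sigma_i^2=I$, $\sigma_i\sigma_j=-\sigma_j\sigma_i$ ($i\neq j$), and both $\{\sigma_1,\sigma_2,\sigma_3\}$ and $\{I,\sigma_1\sigma_2,\sigma_1\sigma_3,\sigma_2\sigma_3\}$ are linearly independent (e.g. the $2\times 2$ Pauli matrices). Then $[\mathcal D,\pi(a)]=\sum_i\partial_i(a)\otimes\sigma_i$. Let $(\Omega^\bullet(\mathcal A),\delta)$ be the universal differential algebra of $\mathcal A$ and $\Pi(a_0\delta a_1\cdots\delta a_k)=\pi(a_0)[\mathcal D,\pi(a_1)]\cdots[\mathcal D,\pi(a_k)]$. With $J_0^k=\ker\Pi\cap\Omega^k(\mathcal A)$, the Connes space of $k$-forms is $\Omega^k_{\mathcal D}(\mathcal A)=\Pi(\Omega^k(\mathcal A))/\Pi(\delta J_0^{k-1})$. The multiplication $m$ sends (class of $\Pi(\omega)$)$\otimes$(class of $\Pi(\eta)$) to the class of $\Pi(\omega\eta)$. It is known that $\Omega^1_{\mathcal D}(\mathcal A)$ is free with basis $e_i=1\otimes\sigma_i$ ($i=1,2,3$), with $ae_i=e_ia$ for $a\in\mathcal A$, and $\Omega^2_{\mathcal D}(\mathcal A)$ is free with basis $e_{ij}$ = class of $1\otimes\sigma_i\sigma_j$ ($i<j$). *)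

theory Defs
  imports "HOL-Analysis.Finite_Cartesian_Product"
begin

text \<open>The algebra A is an abstract complex unital *-algebra (type 'a, a ring_1 with a
 central ring homomorphism sc from the complex numbers and a conjugate-linear involution st)
 generated by S 1, S 2, S 3 subject to the Cuntz relations. Operators of the form
 sum a_k (x) M_k on L2(O_3,tau) (x) C^N are modelled as N x N matrices over A
 (M_N(A) = A (x) M_N(C)); this is faithful since tau is faithful.\<close>

inductive_set gen_alg :: "(nat \<Rightarrow> 'a::ring_1) \<Rightarrow> ('a \<Rightarrow> 'a) \<Rightarrow> (complex \<Rightarrow> 'a) \<Rightarrow> 'a set"
  for S st sc where
  gen_S: "i \<in> {1,2,3} \<Longrightarrow> S i \<in> gen_alg S st sc"
| gen_Sstar: "i \<in> {1,2,3} \<Longrightarrow> st (S i) \<in> gen_alg S st sc"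
| gen_scalar: "sc z \<in> gen_alg S st sc"
| gen_add: "a \<in> gen_alg S st sc \<Longrightarrow> b \<in> gen_alg S st sc \<Longrightarrow> a + b \<in> gen_alg S st sc"
| gen_mult: "a \<in> gen_alg S st sc \<Longrightarrow> b \<in> gen_alg S st sc \<Longrightarrow> a * b \<in> gen_alg S st sc"

definition liftM :: "(complex \<Rightarrow> 'a::ring_1) \<Rightarrow> complex^'n^'n \<Rightarrow> 'a^'n^'n" where
  "liftM sc M = (\<chi> r c. sc (M $ r $ c))"

definition piA :: "'a::ring_1 \<Rightarrow> 'a^'n^'n" where
  "piA a = (\<chi> r c. if r = c then a else 0)"

text \<open>[D, pi(a)] = sum_i d_i(a) (x) sigma_i.\<close>
definition Dcomm :: "(complex \<Rightarrow> 'a::ring_1) \<Rightarrow> (nat \<Rightarrow> complex^'n^'n) \<Rightarrow> (nat \<Rightarrow> 'a \<Rightarrow> 'a)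
    \<Rightarrow> 'a \<Rightarrow> 'a^'n^'n" where
  "Dcomm sc \<sigma> der a = (\<Sum>i\<in>{1,2,3::nat}. piA (der i a) ** liftM sc (\<sigma> i))"

text \<open>Pi(delta a_1 ... delta a_k) = [D,a_1]...[D,a_k].\<close>
definition PiDelta :: "(complex \<Rightarrow> 'a::ring_1) \<Rightarrow> (nat \<Rightarrow> complex^'n^'n) \<Rightarrow> (nat \<Rightarrow> 'a \<Rightarrow> 'a)
    \<Rightarrow> 'a list \<Rightarrow> 'a^'n^'n" where
  "PiDelta sc \<sigma> der as = foldr (\<lambda>a M. Dcomm sc \<sigma> der a ** M) as (mat 1)"

text \<open>Pi(a_0 delta a_1 ... delta a_k) = pi(a_0)[D,a_1]...[D,a_k], for the list a_0 # as.\<close>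
definition PiForm :: "(complex \<Rightarrow> 'a::ring_1) \<Rightarrow> (nat \<Rightarrow> complex^'n^'n) \<Rightarrow> (nat \<Rightarrow> 'a \<Rightarrow> 'a)
    \<Rightarrow> 'a list \<Rightarrow> 'a^'n^'n" where
  "PiForm sc \<sigma> der as = piA (hd as) ** PiDelta sc \<sigma> der (tl as)"

text \<open>Pi(Omega^k(A)): images of finite sums of elementary k-forms a_0 delta a_1 ... delta a_k.\<close>
definition PiOmega :: "(complex \<Rightarrow> 'a::ring_1) \<Rightarrow> (nat \<Rightarrow> complex^'n^'n) \<Rightarrow> (nat \<Rightarrow> 'a \<Rightarrow> 'a)
    \<Rightarrow> nat \<Rightarrow> ('a^'n^'n) set" where
  "PiOmega sc \<sigma> der k = {sum_list (map (PiForm sc \<sigma> der) ts) | ts. \<forall>t\<in>set ts. length t = Suc k}"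

text \<open>Junk forms Pi(delta J_0^(k-1)) for k >= 1: for omega = sum a_0 delta a_1 ... delta a_(k-1)
 in Omega^(k-1) with Pi(omega) = 0, Pi(delta omega) = sum [D,a_0]...[D,a_(k-1)].
 (For k = 0 there is no junk.)\<close>
definition Junk :: "(complex \<Rightarrow> 'a::ring_1) \<Rightarrow> (nat \<Rightarrow> complex^'n^'n) \<Rightarrow> (nat \<Rightarrow> 'a \<Rightarrow> 'a)
    \<Rightarrow> nat \<Rightarrow> ('a^'n^'n) set" where
  "Junk sc \<sigma> der k = (if k = 0 then {0} else
     {sum_list (map (PiDelta sc \<sigma> der) ts) | ts.
        (\<forall>t\<in>set ts. length t = k) \<and> sum_list (map (PiForm sc \<sigma> der) ts) = 0})"

end

theory Submission
  imports Defs
begin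

locale scl =
  fixes sc :: "complex \<Rightarrow> 'a::ring_1"
  assumes sc_add: "\<And>x y. sc (x + y) = sc x + sc y"
    and sc_mult: "\<And>x y. sc (x * y) = sc x * sc y"
    and sc_one: "sc 1 = 1"
    and sc_central: "\<And>z a. sc z * a = a * sc z"
begin

lemma sc0: "sc 0 = 0"
  using sc_add[of 0 0] by simp

lemma sc_sum: "sc (sum f A) = sum (\<lambda>x. sc (f x)) A"
  by (induction A rule: infinite_finite_induct) (auto simp: sc0 sc_add)

definition T :: "'a \<Rightarrow> complex^'n^'n \<Rightarrow> 'a^'n^'n" where
  "T a M = piA a ** liftM sc M"

lemma T_nth: "T a M $ r $ c = a * sc (M $ r $ c)"
  unfolding T_def matrix_matrix_mult_def piA_def liftM_def
  by (auto simp: if_distrib if_distribR sum.delta cong: if_cong)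

lemma T_mult: "T a M ** T b N = T (a * b) (M ** N)"
proof -
  have e: "a * sc x * (b * sc y) = a * b * sc (x * y)" for x y
  proof -
    have "a * sc x * (b * sc y) = a * (sc x * b) * sc y" by (simp add: mult.assoc)
    also have "\<dots> = a * (b * sc x) * sc y" by (simp only: sc_central[of x b])
    also have "\<dots> = a * b * sc (x * y)" by (simp add: mult.assoc sc_mult)
    finally show ?thesis .
  qed
  show ?thesis
    by (simp add: vec_eq_iff T_nth matrix_matrix_mult_def e sc_sum sum_distrib_left)
qed

lemma T_add: "T (a + b) M = T a M + T b M"
  by (simp add: vec_eq_iff T_nth distrib_right)
lemma T_addM: "T a (M + N) = T a M + T a N"
  by (simp add: vec_eq_iff T_nth distrib_left sc_add)
lemma T_neg: "T (- a) M = - T a M"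
  by (simp add: vec_eq_iff T_nth)
lemma T_diff: "T (a - b) M = T a M - T b M"
  by (simp add: vec_eq_iff T_nth left_diff_distrib)
lemma sc_neg: "sc (- x) = - sc x"
  using minus_unique[of "sc x" "sc (-x)"] sc_add[of x "-x"] sc0 by simp
lemma T_negM: "T a (- M) = - T a M"
  by (simp add: vec_eq_iff T_nth sc_neg)
lemma T_zero[simp]: "T 0 M = 0"
  by (simp add: vec_eq_iff T_nth)
lemma piA_T: "piA a = T a (mat 1)"
  by (simp add: vec_eq_iff T_nth piA_def mat_def sc0 sc_one)
lemma lift_piA: "liftM sc M ** piA a = T a M"
  unfolding matrix_matrix_mult_def piA_def liftM_def
  by (simp add: vec_eq_iff T_nth if_distrib sc_central[of _ a] cong: if_cong)
lemma lift_T: "liftM sc M = T 1 M"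
  by (simp add: vec_eq_iff T_nth liftM_def)

lemma rdistrib: "((A::'a^'n^'n) + B) ** C = A ** C + B ** C"
  by (vector matrix_matrix_mult_def sum.distrib[symmetric] distrib_right)
lemma rneg: "(- (A::'a^'n^'n)) ** C = - (A ** C)"
  by (vector matrix_matrix_mult_def sum_negf[symmetric])
lemma lneg: "(C::'a^'n^'n) ** (- A) = - (C ** A)"
  by (vector matrix_matrix_mult_def sum_negf[symmetric])

lemma piA_mult: "piA ((a::'a) * b) = piA a ** piA b"
  unfolding piA_T T_mult by simp
lemma piA_neg: "piA (- (a::'a)) = - piA a"
  unfolding piA_T T_neg ..
lemma piA_one: "piA 1 = mat 1"
  by (simp add: piA_def mat_def)

end

locale setupL = scl sc for sc :: "complex \<Rightarrow> 'a::ring_1" +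
  fixes S :: "nat \<Rightarrow> 'a" and st :: "'a \<Rightarrow> 'a" and der :: "nat \<Rightarrow> 'a \<Rightarrow> 'a"
    and \<sigma> :: "nat \<Rightarrow> complex^'n^'n"
  assumes st_add: "\<And>a b. st (a + b) = st a + st b"
    and cuntz_orth: "\<And>i j. i \<in> {1,2,3} \<Longrightarrow> j \<in> {1,2,3} \<Longrightarrow>
                       st (S i) * S j = (if i = j then 1 else 0)"
    and der_add: "\<And>k a b. k \<in> {1,2,3} \<Longrightarrow> der k (a + b) = der k a + der k b"
    and der_leibniz: "\<And>k a b. k \<in> {1,2,3} \<Longrightarrow> der k (a * b) = der k a * b + a * der k b"
    and der_star: "\<And>k a. k \<in> {1,2,3} \<Longrightarrow> der k (st a) = st (der k a)"
    and d1: "der 1 (S 1) = 0" "der 1 (S 2) = - S 3" "der 1 (S 3) = S 2"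
    and d2: "der 2 (S 1) = - S 3" "der 2 (S 2) = 0" "der 2 (S 3) = S 1"
    and d3: "der 3 (S 1) = S 2" "der 3 (S 2) = - S 1" "der 3 (S 3) = 0"
    and sigma_sq: "\<And>i. i \<in> {1,2,3} \<Longrightarrow> \<sigma> i ** \<sigma> i = mat 1"
    and sigma_anti: "\<And>i j. i \<in> {1,2,3} \<Longrightarrow> j \<in> {1,2,3} \<Longrightarrow> i \<noteq> j \<Longrightarrow>
                       \<sigma> i ** \<sigma> j = - (\<sigma> j ** \<sigma> i)"
begin

abbreviation "Dc \<equiv> Dcomm sc \<sigma> der"
abbreviation "PF \<equiv> PiForm sc \<sigma> der"

lemma st0: "st 0 = 0"
  using st_add[of 0 0] by simp
lemma st_neg: "st (- x) = - st x"
  using minus_unique[of "st x" "st (-x)"] st_add[of x "-x"] st0 by simp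

lemma Dc_eq: "Dc a = T (der 1 a) (\<sigma> 1) + T (der 2 a) (\<sigma> 2) + T (der 3 a) (\<sigma> 3)"
  by (simp add: Dcomm_def T_def add.assoc)

lemma PF2: "PF [a, b] = piA a ** Dc b"
  by (simp add: PiForm_def PiDelta_def)
lemma PF3: "PF [a, b, d] = piA a ** Dc b ** Dc d"
  by (simp add: PiForm_def PiDelta_def matrix_mul_assoc)

lemma Dc_leib: "Dc (x * y) = piA x ** Dc y + Dc x ** piA y"
  by (simp add: Dc_eq der_leibniz T_add piA_T T_mult matrix_add_ldistrib rdistrib algebra_simps)

lemma PF_prod: "PF [a, b] ** PF [c, d] = PF [a, b * c, d] - PF [a * b, c, d]"
  by (simp add: PF2 PF3 Dc_leib piA_mult matrix_add_ldistrib rdistrib matrix_mul_assoc)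

lemma PF_neg: "PF ((- x) # r) = - PF (x # r)"
  by (simp add: PiForm_def piA_neg rneg)

lemma Om_add: "x \<in> PiOmega sc \<sigma> der k \<Longrightarrow> y \<in> PiOmega sc \<sigma> der k \<Longrightarrow> x + y \<in> PiOmega sc \<sigma> der k"
  unfolding PiOmega_def
proof clarify
  fix ts ts' :: "'a list list" assume "\<forall>t\<in>set ts. length t = Suc k" "\<forall>t\<in>set ts'. length t = Suc k"
  then show "\<exists>ts''. sum_list (map PF ts) + sum_list (map PF ts') = sum_list (map PF ts'') \<and> (\<forall>t\<in>set ts''. length t = Suc k)"
    by (intro exI[of _ "ts @ ts'"]) auto
qed

lemma Om_single: "length t = Suc k \<Longrightarrow> PF t \<in> PiOmega sc \<sigma> der k"
  unfolding PiOmega_def by (intro CollectI exI[of _ "[t]"]) auto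

lemma Om_diff3: "PF [a, b, d] - PF [a', b', d'] \<in> PiOmega sc \<sigma> der 2"
proof -
  have eq: "PF [a, b, d] - PF [a', b', d'] = PF [a, b, d] + PF [-a', b', d']"
    by (simp only: PF_neg) simp
  show ?thesis unfolding eq by (rule Om_add; rule Om_single; simp)
qed

lemmas co = cuntz_orth

lemma DS1: "Dc (S 1) = T (- S 3) (\<sigma> 2) + T (S 2) (\<sigma> 3)"
  unfolding Dc_eq d1 d2 d3 by simp
lemma DS2: "Dc (S 2) = T (- S 3) (\<sigma> 1) + T (- S 1) (\<sigma> 3)"
  unfolding Dc_eq d1 d2 d3 by simp
lemma DS3: "Dc (S 3) = T (S 2) (\<sigma> 1) + T (S 1) (\<sigma> 2)"
  unfolding Dc_eq d1 d2 d3 by simp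

lemma form1: "T c (\<sigma> 1) = PF [- (c * st (S 3)), S 2]"
  unfolding PF2 DS2 by (simp add: piA_T T_mult matrix_add_ldistrib mult.assoc co)
lemma form2: "T c (\<sigma> 2) = PF [c * st (S 1), S 3]"
  unfolding PF2 DS3 by (simp add: piA_T T_mult matrix_add_ldistrib mult.assoc co)
lemma form3: "T c (\<sigma> 3) = PF [c * st (S 2), S 1]"
  unfolding PF2 DS1 by (simp add: piA_T T_mult matrix_add_ldistrib mult.assoc co)

lemma forms: "i \<in> {1,2,3} \<Longrightarrow> \<exists>u v. T c (\<sigma> i) = PF [u, v]"
  using form1 form2 form3 by blast

lemma om1: "i \<in> {1,2,3} \<Longrightarrow> T c (\<sigma> i) \<in> PiOmega sc \<sigma> der 1"
  using forms[of i c] Om_single by fastforce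

lemma om2: assumes "i \<in> {1,2,3}" "j \<in> {1,2,3}"
  shows "T c (\<sigma> i ** \<sigma> j) \<in> PiOmega sc \<sigma> der 2"
proof -
  obtain u v where 1: "T c (\<sigma> i) = PF [u, v]" using forms assms by blast
  obtain u' v' where 2: "T 1 (\<sigma> j) = PF [u', v']" using forms assms by blast
  have "T c (\<sigma> i ** \<sigma> j) = T c (\<sigma> i) ** T 1 (\<sigma> j)" by (simp add: T_mult)
  also have "\<dots> = PF [u, v * u', v'] - PF [u * v, u', v']" by (simp add: 1 2 PF_prod)
  finally show ?thesis using Om_diff3 by simp
qed

lemma Z: "piA (st (S 1)) ** Dc (S 1) = 0"
  unfolding DS1 by (simp add: piA_T T_mult matrix_add_ldistrib co)

lemma W: "Dc (st (S 1)) ** Dc (S 1) = T 2 (mat 1)"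
proof -
  have Dst: "Dc (st (S 1)) = T (- st (S 3)) (\<sigma> 2) + T (st (S 2)) (\<sigma> 3)"
  proof -
    have e1: "der 1 (st (S 1)) = 0" using der_star[of 1 "S 1"] d1 st0 by simp
    have e2: "der 2 (st (S 1)) = - st (S 3)" using der_star[of 2 "S 1"] d2 st_neg by simp
    have e3: "der 3 (st (S 1)) = st (S 2)" using der_star[of 3 "S 1"] d3 by simp
    show ?thesis unfolding Dc_eq e1 e2 e3 by simp
  qed
  have "Dc (st (S 1)) ** Dc (S 1) = T 1 (mat 1) + T 1 (mat 1)"
    unfolding Dst DS1 by (simp add: T_mult matrix_add_ldistrib rdistrib co sigma_sq sigma_anti[of 3 2])
  also have "\<dots> = T 2 (mat 1)" by (simp add: T_add[symmetric] one_add_one)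
  finally show ?thesis .
qed

lemma junk: "T c (mat 1) \<in> Junk sc \<sigma> der 2"
proof -
  define h where "h = c * sc (1/2)"
  have sc2: "sc 2 = 2" using sc_add[of 1 1] sc_one by simp
  have "sc (1/2) * 2 = sc (1/2 * 2)" by (simp only: sc_mult sc2)
  then have h': "sc (1/2) * 2 = 1" using sc_one by simp
  have h2: "h * 2 = c" by (simp only: h_def mult.assoc h' mult_1_right)
  have f: "PF [h * st (S 1), S 1] = 0"
    unfolding PF2 piA_mult matrix_mul_assoc[symmetric] Z by simp
  have "PiDelta sc \<sigma> der [h * st (S 1), S 1] = Dc (h * st (S 1)) ** Dc (S 1)"
    by (simp add: PiDelta_def)
  also have "\<dots> = piA h ** (Dc (st (S 1)) ** Dc (S 1)) + Dc h ** (piA (st (S 1)) ** Dc (S 1))"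
    unfolding Dc_leib rdistrib matrix_mul_assoc ..
  also have "\<dots> = T c (mat 1)"
    unfolding Z W by (simp add: piA_T T_mult h2)
  finally have d: "PiDelta sc \<sigma> der [h * st (S 1), S 1] = T c (mat 1)" .
  show ?thesis unfolding Junk_def
    using f d by (simp, intro exI[of _ "[[h * st (S 1), S 1]]"]) simp
qed

end

context scl begin
lemma C: fixes a b :: "nat \<Rightarrow> 'a" and s1 s2 s3 :: "complex^'n^'n"
  assumes sq: "s1 ** s1 = mat 1" "s2 ** s2 = mat 1" "s3 ** s3 = mat 1"
  and an: "s2 ** s1 = - (s1 ** s2)" "s3 ** s1 = - (s1 ** s3)" "s3 ** s2 = - (s2 ** s3)"
  shows "(T (a 1) s1 + T (a 2) s2 + T (a 3) s3) **
        (T (b 1) s1 + T (b 2) s2 + T (b 3) s3) -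
        (T (a 1 * b 2 - a 2 * b 1) (s1 ** s2) + T (a 1 * b 3 - a 3 * b 1) (s1 ** s3)
       + T (a 2 * b 3 - a 3 * b 2) (s2 ** s3)) = T (a 1 * b 1 + a 2 * b 2 + a 3 * b 3) (mat 1)"
  unfolding matrix_add_ldistrib rdistrib T_mult sq an T_negM T_diff T_add
  by (simp only: diff_conv_add_uminus minus_add add_ac) (simp add: add_ac)
end

theorem mainTheorem3:
  fixes S :: "nat \<Rightarrow> 'a::ring_1"
    and st :: "'a \<Rightarrow> 'a"
    and sc :: "complex \<Rightarrow> 'a"
    and der :: "nat \<Rightarrow> 'a \<Rightarrow> 'a"
    and \<sigma> :: "nat \<Rightarrow> complex^'n^'n"
  assumes sc_add: "\<And>x y. sc (x + y) = sc x + sc y"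
    and sc_mult: "\<And>x y. sc (x * y) = sc x * sc y"
    and sc_one: "sc 1 = 1"
    and sc_central: "\<And>z a. sc z * a = a * sc z"
    and st_add: "\<And>a b. st (a + b) = st a + st b"
    and st_mult: "\<And>a b. st (a * b) = st b * st a"
    and st_invol: "\<And>a. st (st a) = a"
    and st_sc: "\<And>z. st (sc z) = sc (cnj z)"
    and cuntz_orth: "\<And>i j. i \<in> {1,2,3} \<Longrightarrow> j \<in> {1,2,3} \<Longrightarrow>
                       st (S i) * S j = (if i = j then 1 else 0)"
    and cuntz_sum: "(\<Sum>j\<in>{1,2,3::nat}. S j * st (S j)) = 1"
    and generated: "\<And>a. a \<in> gen_alg S st sc"
    and der_add: "\<And>k a b. k \<in> {1,2,3} \<Longrightarrow> der k (a + b) = der k a + der k b"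
    and der_leibniz: "\<And>k a b. k \<in> {1,2,3} \<Longrightarrow> der k (a * b) = der k a * b + a * der k b"
    and der_scalar: "\<And>k z. k \<in> {1,2,3} \<Longrightarrow> der k (sc z) = 0"
    and der_star: "\<And>k a. k \<in> {1,2,3} \<Longrightarrow> der k (st a) = st (der k a)"
    and d1: "der 1 (S 1) = 0" "der 1 (S 2) = - S 3" "der 1 (S 3) = S 2"
    and d2: "der 2 (S 1) = - S 3" "der 2 (S 2) = 0" "der 2 (S 3) = S 1"
    and d3: "der 3 (S 1) = S 2" "der 3 (S 2) = - S 1" "der 3 (S 3) = 0"
    and sigma_sq: "\<And>i. i \<in> {1,2,3} \<Longrightarrow> \<sigma> i ** \<sigma> i = mat 1"
    and sigma_anti: "\<And>i j. i \<in> {1,2,3} \<Longrightarrow> j \<in> {1,2,3} \<Longrightarrow> i \<noteq> j \<Longrightarrow>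
                       \<sigma> i ** \<sigma> j = - (\<sigma> j ** \<sigma> i)"
    and sigma_indep1: "\<And>c1 c2 c3. (\<chi> r s. c1 * \<sigma> 1 $ r $ s + c2 * \<sigma> 2 $ r $ s + c3 * \<sigma> 3 $ r $ s) = 0
                         \<Longrightarrow> c1 = 0 \<and> c2 = 0 \<and> c3 = 0"
    and sigma_indep2: "\<And>c0 c1 c2 c3. (\<chi> r s. c0 * mat 1 $ r $ s + c1 * (\<sigma> 1 ** \<sigma> 2) $ r $ s
                           + c2 * (\<sigma> 1 ** \<sigma> 3) $ r $ s + c3 * (\<sigma> 2 ** \<sigma> 3) $ r $ s) = 0
                         \<Longrightarrow> c0 = 0 \<and> c1 = 0 \<and> c2 = 0 \<and> c3 = 0"
  shows
    \<comment> \<open>surjectivity of m: every class in Omega^2_D is m of a finite sum of simple tensors\<close>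
    "(\<forall>z \<in> PiOmega sc \<sigma> der 2. \<exists>ps.
        (\<forall>(x, y) \<in> set ps. x \<in> PiOmega sc \<sigma> der 1 \<and> y \<in> PiOmega sc \<sigma> der 1) \<and>
        z - sum_list (map (\<lambda>(x, y). x ** y) ps) \<in> Junk sc \<sigma> der 2)
     \<and>
    \<comment> \<open>the formula m(sum e_i a_i (x) sum e_j b_j) = sum_(i<j) e_ij (a_i b_j - a_j b_i)\<close>
     (\<forall>a b :: nat \<Rightarrow> 'a.
        (\<Sum>i\<in>{1,2,3::nat}. liftM sc (\<sigma> i) ** piA (a i)) \<in> PiOmega sc \<sigma> der 1 \<and>
        (\<Sum>j\<in>{1,2,3::nat}. liftM sc (\<sigma> j) ** piA (b j)) \<in> PiOmega sc \<sigma> der 1 \<and>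
        (\<Sum>(i, j)\<in>{(i, j). i \<in> {1,2,3::nat} \<and> j \<in> {1,2,3} \<and> i < j}.
            liftM sc (\<sigma> i ** \<sigma> j) ** piA (a i * b j - a j * b i)) \<in> PiOmega sc \<sigma> der 2 \<and>
        (\<Sum>i\<in>{1,2,3::nat}. liftM sc (\<sigma> i) ** piA (a i))
          ** (\<Sum>j\<in>{1,2,3::nat}. liftM sc (\<sigma> j) ** piA (b j))
        - (\<Sum>(i, j)\<in>{(i, j). i \<in> {1,2,3::nat} \<and> j \<in> {1,2,3} \<and> i < j}.
            liftM sc (\<sigma> i ** \<sigma> j) ** piA (a i * b j - a j * b i))
        \<in> Junk sc \<sigma> der 2)"
  proof -
  interpret scl sc by unfold_locales (fact sc_add sc_mult sc_one sc_central)+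
  interpret L: setupL sc S st der \<sigma>
    by unfold_locales (fact st_add cuntz_orth der_add der_leibniz der_star d1 d2 d3 sigma_sq sigma_anti)+
  have P1: "\<exists>ps. (\<forall>(x, y) \<in> set ps. x \<in> PiOmega sc \<sigma> der 1 \<and> y \<in> PiOmega sc \<sigma> der 1) \<and>
        z - sum_list (map (\<lambda>(x, y). x ** y) ps) \<in> Junk sc \<sigma> der 2"
    if zin: "z \<in> PiOmega sc \<sigma> der 2" for z
  proof -
    obtain ts where ts0: "\<forall>t\<in>set ts. length t = Suc 2" and z: "z = sum_list (map L.PF ts)"
      using zin unfolding PiOmega_def by blast
    have ts: "\<forall>t\<in>set ts. length t = 3" using ts0 by simp
    have each: "L.PF t = L.PF [t!0, t!1] ** L.PF [1, t!2]" if "length t = 3" for t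
    proof -
      obtain x y w where "t = [x, y, w]" using \<open>length t = 3\<close>
        by (cases t; cases "tl t"; cases "tl (tl t)") (auto simp: numeral_3_eq_3)
      then show ?thesis by (simp add: L.PF2 L.PF3 piA_one matrix_mul_assoc)
    qed
    let ?ps = "map (\<lambda>t. (L.PF [t!0, t!1], L.PF [1, t!2])) ts"
    have "sum_list (map (\<lambda>(x, y). x ** y) ?ps) = sum_list (map L.PF ts)"
      using ts each by (simp add: o_def) (metis (no_types, lifting) map_eq_conv)
    moreover have "(\<forall>(x, y) \<in> set ?ps. x \<in> PiOmega sc \<sigma> der 1 \<and> y \<in> PiOmega sc \<sigma> der 1)"
      by (auto intro!: L.Om_single)
    moreover have "(0::'a^'n^'n) \<in> Junk sc \<sigma> der 2"
      unfolding Junk_def by (simp, intro exI[of _ "[]"]) simp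
    ultimately show ?thesis using z by (intro exI[of _ ?ps]) simp
  qed
  have P2: "(\<Sum>i\<in>{1,2,3::nat}. liftM sc (\<sigma> i) ** piA (a i)) \<in> PiOmega sc \<sigma> der 1 \<and>
        (\<Sum>j\<in>{1,2,3::nat}. liftM sc (\<sigma> j) ** piA (b j)) \<in> PiOmega sc \<sigma> der 1 \<and>
        (\<Sum>(i, j)\<in>{(i, j). i \<in> {1,2,3::nat} \<and> j \<in> {1,2,3} \<and> i < j}.
            liftM sc (\<sigma> i ** \<sigma> j) ** piA (a i * b j - a j * b i)) \<in> PiOmega sc \<sigma> der 2 \<and>
        (\<Sum>i\<in>{1,2,3::nat}. liftM sc (\<sigma> i) ** piA (a i))
          ** (\<Sum>j\<in>{1,2,3::nat}. liftM sc (\<sigma> j) ** piA (b j))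
        - (\<Sum>(i, j)\<in>{(i, j). i \<in> {1,2,3::nat} \<and> j \<in> {1,2,3} \<and> i < j}.
            liftM sc (\<sigma> i ** \<sigma> j) ** piA (a i * b j - a j * b i))
        \<in> Junk sc \<sigma> der 2" for a b :: "nat \<Rightarrow> 'a"
  proof -
    have pairs: "{(i, j). i \<in> {1,2,3::nat} \<and> j \<in> {1,2,3} \<and> i < j} = {(1,2),(1,3),(2,3)}"
      by auto
    have s1: "(\<Sum>i\<in>{1,2,3::nat}. liftM sc (\<sigma> i) ** piA (c i)) =
       T (c 1) (\<sigma> 1) + T (c 2) (\<sigma> 2) + T (c 3) (\<sigma> 3)" for c :: "nat \<Rightarrow> 'a"
      by (simp add: lift_piA add.assoc)
    have s2: "(\<Sum>(i, j)\<in>{(i, j). i \<in> {1,2,3::nat} \<and> j \<in> {1,2,3} \<and> i < j}.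
            liftM sc (\<sigma> i ** \<sigma> j) ** piA (a i * b j - a j * b i)) =
       T (a 1 * b 2 - a 2 * b 1) (\<sigma> 1 ** \<sigma> 2) + T (a 1 * b 3 - a 3 * b 1) (\<sigma> 1 ** \<sigma> 3)
       + T (a 2 * b 3 - a 3 * b 2) (\<sigma> 2 ** \<sigma> 3)"
      unfolding pairs by (simp add: lift_piA add.assoc)
    have A: "T (c 1) (\<sigma> 1) + T (c 2) (\<sigma> 2) + T (c 3) (\<sigma> 3) \<in> PiOmega sc \<sigma> der 1" for c :: "nat \<Rightarrow> 'a"
      by (intro L.Om_add L.om1) auto
    have B: "T (a 1 * b 2 - a 2 * b 1) (\<sigma> 1 ** \<sigma> 2) + T (a 1 * b 3 - a 3 * b 1) (\<sigma> 1 ** \<sigma> 3)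
       + T (a 2 * b 3 - a 3 * b 2) (\<sigma> 2 ** \<sigma> 3) \<in> PiOmega sc \<sigma> der 2"
      by (intro L.Om_add L.om2) auto
    have sq: "\<sigma> 1 ** \<sigma> 1 = mat 1" "\<sigma> 2 ** \<sigma> 2 = mat 1" "\<sigma> 3 ** \<sigma> 3 = mat 1"
      by (rule sigma_sq; simp)+
    have an: "\<sigma> 2 ** \<sigma> 1 = - (\<sigma> 1 ** \<sigma> 2)" "\<sigma> 3 ** \<sigma> 1 = - (\<sigma> 1 ** \<sigma> 3)"
       "\<sigma> 3 ** \<sigma> 2 = - (\<sigma> 2 ** \<sigma> 3)"
      by (rule sigma_anti; simp)+
    have C: "(T (a 1) (\<sigma> 1) + T (a 2) (\<sigma> 2) + T (a 3) (\<sigma> 3)) **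
        (T (b 1) (\<sigma> 1) + T (b 2) (\<sigma> 2) + T (b 3) (\<sigma> 3)) -
        (T (a 1 * b 2 - a 2 * b 1) (\<sigma> 1 ** \<sigma> 2) + T (a 1 * b 3 - a 3 * b 1) (\<sigma> 1 ** \<sigma> 3)
       + T (a 2 * b 3 - a 3 * b 2) (\<sigma> 2 ** \<sigma> 3)) = T (a 1 * b 1 + a 2 * b 2 + a 3 * b 3) (mat 1)"
      by (rule C[OF sq an])
    show ?thesis unfolding s1 s2 C using A[of a] A[of b] B L.junk by blast
  qed
  show ?thesis using P1 P2 by blast
qed

end
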